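(* Let $t\in\mathbb{R}\setminus\{2\}$ (when $t>2$, all matrices and vectors involved are assumed to have strictly positive entries), $\varepsilon\ge 0$, $\tilde r,\tilde c\in\tilde\Delta_n$. For any $\tilde P,\tilde Q\in\tilde U_n^{\varepsilon}(\tilde r,\tilde c)$ and any $\beta\in[0,1]$, $$\big(\beta\,\tilde P^{1/t^*}+(1-\beta)\,\tilde Q^{1/t^*}\big)^{t^*}\in\tilde U_n^{\varepsilon}(\tilde r,\tilde c).$$
   Context: $t^*=1/(2-t)$; powers of vectors/matrices are entrywise. For $s\neq1$, $\log_s(z)=(z^{1-s}-1)/(1-s)$; $\log_1=\log$ and $\log_0(z)=z-1$. Co-simplex: $\tilde\Delta_n=\{\tilde p\in\mathbb{R}^n:\tilde p\ge0,\ \sum_i\tilde p_i^{1/t^*}=1\}$. Co-polytope: $\tilde U_n(\tilde r,\tilde c)=\{\tilde P\in\mathbb{R}^{n\times n}_{\ge0}:\sum_j\tilde P_{ij}^{1/t^*}=\tilde r_i^{1/t^*}\ \forall i,\ \sum_i\tilde P_{ij}^{1/t^*}=\tilde c_j^{1/t^*}\ \forall j\}$. Tempered relative entropy: $D_t(\tilde u\|\tilde v)=\sum_k[\tilde u_k(\log_t\tilde u_k-\log_t\tilde v_k)-\log_{t-1}\tilde u_k+\log_{t-1}\tilde v_k]$ (sum over all entries). Ball: $\tilde U_n^{\varepsilon}(\tilde r,\tilde c)=\{\tilde P\in\tilde U_n(\tilde r,\tilde c): D_t(\tilde P\|\tilde r\tilde c^\top)\le\varepsilon\}$. *)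

theory Defs
  imports Complex_Main
begin

definition tstar :: "real \<Rightarrow> real" where
  "tstar t = 1 / (2 - t)"

definition logt :: "real \<Rightarrow> real \<Rightarrow> real" where
  "logt s z = (if s = 1 then ln z else (z powr (1 - s) - 1) / (1 - s))"

definition co_simplex :: "real \<Rightarrow> ('n::finite \<Rightarrow> real) set" where
  "co_simplex t = {p. (\<forall>i. p i \<ge> 0) \<and> (\<Sum>i\<in>UNIV. p i powr (1 / tstar t)) = 1}"

definition co_polytope :: "real \<Rightarrow> ('n::finite \<Rightarrow> real) \<Rightarrow> ('n \<Rightarrow> real)
    \<Rightarrow> ('n \<Rightarrow> 'n \<Rightarrow> real) set" where
  "co_polytope t r c = {P. (\<forall>i j. P i j \<ge> 0)
     \<and> (\<forall>i. (\<Sum>j\<in>UNIV. P i j powr (1 / tstar t)) = r i powr (1 / tstar t))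
     \<and> (\<forall>j. (\<Sum>i\<in>UNIV. P i j powr (1 / tstar t)) = c j powr (1 / tstar t))}"

definition tempered_rel_entropy :: "real \<Rightarrow> ('n::finite \<Rightarrow> 'n \<Rightarrow> real)
    \<Rightarrow> ('n \<Rightarrow> 'n \<Rightarrow> real) \<Rightarrow> real" where
  "tempered_rel_entropy t U V = (\<Sum>i\<in>UNIV. \<Sum>j\<in>UNIV.
      U i j * (logt t (U i j) - logt t (V i j))
      - logt (t - 1) (U i j) + logt (t - 1) (V i j))"

definition co_polytope_ball :: "real \<Rightarrow> real \<Rightarrow> ('n::finite \<Rightarrow> real) \<Rightarrow> ('n \<Rightarrow> real)
    \<Rightarrow> ('n \<Rightarrow> 'n \<Rightarrow> real) set" where
  "co_polytope_ball t \<epsilon> r c = {P \<in> co_polytope t r c.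
      tempered_rel_entropy t P (\<lambda>i j. r i * c j) \<le> \<epsilon>}"

end

theory Submission
  imports Defs "HOL-Analysis.Analysis"
begin

lemma powr_concave_pos:
  assumes "0 \<le> s" "s \<le> 1" shows "concave_on {0<..} (\<lambda>x::real. x powr s)"
proof (rule f''_le0_imp_concave[where f' = "\<lambda>x. s * x powr (s - 1)" and f'' = "\<lambda>x. s * ((s - 1) * x powr (s - 1 - 1))"])
  fix x :: real assume "x \<in> {0<..}"
  then show "DERIV (\<lambda>x. x powr s) x :> s * x powr (s - 1)"
    by (auto intro!: derivative_eq_intros)
  show "DERIV (\<lambda>x. s * x powr (s - 1)) x :> s * ((s - 1) * x powr (s - 1 - 1))"
    using \<open>x \<in> _\<close> by (auto intro!: derivative_eq_intros)
  show "s * ((s - 1) * x powr (s - 1 - 1)) \<le> 0"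
    using assms by (intro mult_nonneg_nonpos mult_nonpos_nonneg) auto
qed auto

lemma powr_convex_neg:
  assumes "s \<le> 0" shows "convex_on {0<..} (\<lambda>x::real. x powr s)"
proof (rule f''_ge0_imp_convex[where f' = "\<lambda>x. s * x powr (s - 1)" and f'' = "\<lambda>x. s * ((s - 1) * x powr (s - 1 - 1))"])
  fix x :: real assume "x \<in> {0<..}"
  then show "DERIV (\<lambda>x. x powr s) x :> s * x powr (s - 1)"
    by (auto intro!: derivative_eq_intros)
  show "DERIV (\<lambda>x. s * x powr (s - 1)) x :> s * ((s - 1) * x powr (s - 1 - 1))"
    using \<open>x \<in> _\<close> by (auto intro!: derivative_eq_intros)
  show "0 \<le> s * ((s - 1) * x powr (s - 1 - 1))"
    using assms by (intro mult_nonpos_nonpos mult_nonpos_nonneg) auto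
qed auto

lemma xlnx_convex: "convex_on {0<..} (\<lambda>x::real. x * ln x)"
proof (rule f''_ge0_imp_convex[where f' = "\<lambda>x. ln x + 1" and f'' = "\<lambda>x. 1 / x"])
  fix x :: real assume "x \<in> {0<..}"
  then show "DERIV (\<lambda>x. x * ln x) x :> ln x + 1"
    by (auto intro!: derivative_eq_intros)
  show "DERIV (\<lambda>x. ln x + 1) x :> 1 / x"
    using \<open>x \<in> _\<close> by (auto intro!: derivative_eq_intros)
  show "0 \<le> 1 / x" using \<open>x \<in> _\<close> by simp
qed auto

lemma L1:
  fixes x y b s :: real
  assumes "0 < s" "s \<le> 1" "0 \<le> x" "0 \<le> y" "0 \<le> b" "b \<le> 1"
  shows "b * x powr s + (1-b) * y powr s \<le> (b*x+(1-b)*y) powr s"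
proof -
  consider "x > 0" "y > 0" | "x = 0" | "y = 0" using assms by linarith
  then show ?thesis
  proof cases
    case 1
    then show ?thesis using concave_onD[OF powr_concave_pos[of s], of "1-b" x y] assms by simp
  next
    case 2
    have "(1-b) * y powr s \<le> (1-b) powr s * y powr s"
    proof (rule mult_right_mono)
      show "1 - b \<le> (1 - b) powr s" using powr_mono'[of s 1 "1-b"] assms by simp
    qed simp
    then show ?thesis using 2 assms by (simp add: powr_mult)
  next
    case 3
    have "b * x powr s \<le> b powr s * x powr s"
    proof (rule mult_right_mono)
      show "b \<le> b powr s" using powr_mono'[of s 1 "b"] assms by simp
    qed simp
    then show ?thesis using 3 assms by (simp add: powr_mult)
  qed
qed

lemma L2:
  fixes x y b s :: real
  assumes "1 \<le> s" "0 \<le> x" "0 \<le> y" "0 \<le> b" "b \<le> 1"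
  shows "(b*x+(1-b)*y) powr s \<le> b * x powr s + (1-b) * y powr s"
proof -
  consider "x > 0" "y > 0" | "x = 0" | "y = 0" using assms by linarith
  then show ?thesis
  proof cases
    case 1
    then show ?thesis using convex_onD[OF powr_convex[of s], of "1-b" x y] assms by simp
  next
    case 2
    have "(1-b) powr s * y powr s \<le> (1-b) * y powr s"
    proof (rule mult_right_mono)
      show "(1 - b) powr s \<le> 1 - b" using powr_mono'[of 1 s "1-b"] assms by simp
    qed simp
    then show ?thesis using 2 assms by (simp add: powr_mult)
  next
    case 3
    have "b powr s * x powr s \<le> b * x powr s"
    proof (rule mult_right_mono)
      show "b powr s \<le> b" using powr_mono'[of 1 s "b"] assms by simp
    qed simp
    then show ?thesis using 3 assms by (simp add: powr_mult)
  qed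
qed

lemma L3:
  fixes x y b s :: real
  assumes "s \<le> 0" "0 < x" "0 < y" "0 \<le> b" "b \<le> 1"
  shows "(b*x+(1-b)*y) powr s \<le> b * x powr s + (1-b) * y powr s"
  using convex_onD[OF powr_convex_neg[of s], of "1-b" x y] assms by simp

lemma L4:
  fixes x y b :: real
  assumes "0 \<le> x" "0 \<le> y" "0 \<le> b" "b \<le> 1"
  shows "(b*x+(1-b)*y) * ln (b*x+(1-b)*y) \<le> b * (x * ln x) + (1-b) * (y * ln y)"
proof -
  consider "x > 0" "y > 0" | "x = 0" | "y = 0" using assms by linarith
  then show ?thesis
  proof cases
    case 1
    then show ?thesis using convex_onD[OF xlnx_convex, of "1-b" x y] assms by simp
  next
    case 2
    show ?thesis
    proof (cases "b = 1 \<or> y = 0")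
      case True then show ?thesis using 2 by auto
    next
      case False
      then have "0 < 1 - b" "0 < y" using assms by auto
      then have "ln ((1-b)*y) = ln (1-b) + ln y" by (simp add: ln_mult)
      moreover have "ln (1-b) \<le> 0" using assms \<open>0 < 1-b\<close> by simp
      ultimately have "((1-b)*y) * ln ((1-b)*y) = (1-b)*y*ln(1-b) + (1-b)*(y*ln y)"
        using \<open>0 < 1-b\<close> \<open>0<y\<close> by (auto simp: ring_distribs)
      moreover have "(1-b)*y*ln(1-b) \<le> 0"
        using mult_nonneg_nonpos[of "(1-b)*y" "ln(1-b)"] \<open>0 < 1-b\<close> \<open>0<y\<close> \<open>ln (1-b) \<le> 0\<close> by simp
      ultimately
      show ?thesis unfolding 2 by (simp only: mult_zero_right mult_zero_left add_0_left add_0_right; linarith)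
    qed
  next
    case 3
    show ?thesis
    proof (cases "b = 0 \<or> x = 0")
      case True then show ?thesis using 3 by auto
    next
      case False
      then have "0 < b" "0 < x" using assms by auto
      then have "ln (b*x) = ln b + ln x" by (simp add: ln_mult)
      moreover have "ln b \<le> 0" using assms \<open>0 < b\<close> by simp
      ultimately have "(b*x) * ln (b*x) = b*x*ln b + b*(x*ln x)"
        using \<open>0 < b\<close> \<open>0<x\<close> by (auto simp: ring_distribs)
      moreover have "b*x*ln b \<le> 0"
        using mult_nonneg_nonpos[of "b*x" "ln b"] \<open>0 < b\<close> \<open>0<x\<close> \<open>ln b \<le> 0\<close> by simp
      ultimately
      show ?thesis unfolding 3 by (simp only: mult_zero_right mult_zero_left add_0_left add_0_right; linarith)
    qed
  qed
qed


definition hfun :: "real \<Rightarrow> real \<Rightarrow> real \<Rightarrow> real" where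
  "hfun t v w = (w powr tstar t) * (logt t (w powr tstar t) - logt t v)
     - logt (t - 1) (w powr tstar t) + logt (t - 1) v"

lemma hfun_closed:
  fixes t v w :: real
  assumes "t \<noteq> 1" "t \<noteq> 2" "0 \<le> w"
  shows "hfun t v w = w * (1/(1-t) - 1/(2-t)) - (v powr (1-t) / (1-t)) * w powr tstar t
           + (1/(2-t) + logt (t-1) v)"
proof -
  define u where "u = w powr tstar t"
  have s: "tstar t * (2 - t) = 1" using assms by (simp add: tstar_def)
  have u0: "0 \<le> u" by (simp add: u_def)
  have u2: "u powr (2 - t) = w" using assms s by (simp add: u_def powr_powr)
  have u1: "u * u powr (1 - t) = w"
  proof (cases "u = 0")
    case True
    then have "w = 0" using assms by (simp add: u_def)
    then show ?thesis using True by simp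
  next
    case False
    then have "u > 0" using u0 by simp
    then have "u * u powr (1 - t) = u powr (1 + (1 - t))" by (subst powr_add) simp
    also have "1 + (1 - t) = 2 - t" by simp
    finally show ?thesis using u2 by simp
  qed
  have l1: "logt t u = (u powr (1-t) - 1)/(1-t)" using assms by (simp add: logt_def)
  have l2: "logt (t-1) u = (w - 1)/(2-t)" using assms u2 by (simp add: logt_def)
  have l3: "logt t v = (v powr (1-t) - 1)/(1-t)" using assms by (simp add: logt_def)
  have d1: "1 - t \<noteq> 0" "2 - t \<noteq> 0" using assms by auto
  have "hfun t v w = u * ((u powr (1-t) - 1)/(1-t) - (v powr (1-t) - 1)/(1-t)) - (w - 1)/(2-t) + logt (t-1) v"
    unfolding hfun_def u_def[symmetric] l1 l2 l3 ..
  also have "u * ((u powr (1-t) - 1)/(1-t) - (v powr (1-t) - 1)/(1-t)) = (w - u * v powr (1-t))/(1-t)"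
  proof -
    have "u * ((u powr (1-t) - 1)/(1-t) - (v powr (1-t) - 1)/(1-t)) = (u * u powr (1-t) - u * v powr (1-t))/(1-t)"
      using d1 by (simp add: diff_divide_distrib[symmetric] algebra_simps)
    then show ?thesis by (simp only: u1)
  qed
  also have "(w - u * v powr (1-t))/(1-t) - (w - 1)/(2-t) + logt (t-1) v
     = w * (1/(1-t) - 1/(2-t)) - (v powr (1-t) / (1-t)) * u + (1/(2-t) + logt (t-1) v)"
  proof -
    have gen: "(w - u * V)/D1 - (w - 1)/D2 + L = w * (1/D1 - 1/D2) - (V / D1) * u + (1/D2 + L)"
      if "D1 \<noteq> 0" "D2 \<noteq> 0" for D1 D2 V L :: real
      using that by (simp add: field_simps)
    show ?thesis using gen d1 by blast
  qed
  finally show ?thesis by (simp add: u_def)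
qed

lemma hfun_convex:
  fixes t v x y b :: real
  assumes "t \<noteq> 2" "0 \<le> x" "0 \<le> y" "t > 2 \<longrightarrow> 0 < x \<and> 0 < y" "0 \<le> b" "b \<le> 1"
  shows "hfun t v (b*x + (1-b)*y) \<le> b * hfun t v x + (1-b) * hfun t v y"
proof (cases "t = 1")
  case True
  then have ts: "tstar t = 1" by (simp add: tstar_def)
  have h: "hfun t v w = w * ln w - w * ln v - w + 1 + logt 0 v" if "0 \<le> w" for w
    using that True ts by (simp add: hfun_def logt_def algebra_simps)
  have m: "0 \<le> b*x + (1-b)*y" using assms by simp
  have "b * (x * ln x - x * ln v - x + 1 + logt 0 v) + (1-b) * (y * ln y - y * ln v - y + 1 + logt 0 v)
      = (b * (x * ln x) + (1-b) * (y * ln y)) - (b*x + (1-b)*y) * ln v - (b*x + (1-b)*y) + 1 + logt 0 v"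
    by (simp add: algebra_simps)
  then show ?thesis using L4[of x y b] assms h[OF m] h[of x] h[of y] by simp
next
  case False
  define s where "s = tstar t"
  define C where "C = v powr (1-t) / (1-t)"
  define K where "K = 1/(1-t) - 1/(2-t)"
  define k where "k = 1/(2-t) + logt (t-1) v"
  define m where "m = b*x + (1-b)*y"
  have m0: "0 \<le> m" using assms by (simp add: m_def)
  have V: "0 \<le> v powr (1-t)" by simp
  have key: "- C * m powr s \<le> b * (- C * x powr s) + (1-b) * (- C * y powr s)"
  proof -
    consider "t < 1" | "1 < t" "t < 2" | "2 < t" using False assms by linarith
    then show ?thesis
    proof cases
      case 1
      have C0: "0 \<le> C" using 1 V by (simp add: C_def)
      have "0 < s" "s \<le> 1" using 1 by (auto simp: s_def tstar_def)
      from L1[OF this assms(2,3,5,6)] have "b * x powr s + (1-b) * y powr s \<le> m powr s"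
        by (simp add: m_def)
      from mult_left_mono[OF this C0] show ?thesis by (simp add: algebra_simps)
    next
      case 2
      have C0: "C \<le> 0" using 2 V by (simp add: C_def divide_nonneg_neg)
      have "1 \<le> s" using 2 by (auto simp: s_def tstar_def)
      from L2[OF this assms(2,3,5,6)] have "m powr s \<le> b * x powr s + (1-b) * y powr s"
        by (simp add: m_def)
      from mult_left_mono[OF this, of "-C"] C0 show ?thesis by (simp add: algebra_simps)
    next
      case 3
      have C0: "C \<le> 0" using 3 V by (simp add: C_def divide_nonneg_neg)
      have "s \<le> 0" using 3 by (auto simp: s_def tstar_def)
      from L3[OF this _ _ assms(5,6)] 3 assms(4) have "m powr s \<le> b * x powr s + (1-b) * y powr s"
        by (simp add: m_def)
      from mult_left_mono[OF this, of "-C"] C0 show ?thesis by (simp add: algebra_simps)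
    qed
  qed
  have hc: "hfun t v w = w * K - C * w powr s + k" if "0 \<le> w" for w
    using hfun_closed[OF False assms(1) that] by (simp add: K_def C_def k_def s_def)
  have "b * (x * K - C * x powr s + k) + (1-b) * (y * K - C * y powr s + k)
     = m * K + k + (b * (- C * x powr s) + (1-b) * (- C * y powr s))"
    by (simp add: m_def algebra_simps)
  then show ?thesis using key hc[OF m0] hc[OF assms(2)] hc[OF assms(3)] unfolding m_def[symmetric]
    by simp
qed


theorem proposition2:
  fixes t \<epsilon> \<beta> :: real
    and r c :: "'n::finite \<Rightarrow> real"
    and P Q :: "'n \<Rightarrow> 'n \<Rightarrow> real"
  assumes "t \<noteq> 2"
    and "\<epsilon> \<ge> 0"
    and "r \<in> co_simplex t" and "c \<in> co_simplex t"
    and "P \<in> co_polytope_ball t \<epsilon> r c" and "Q \<in> co_polytope_ball t \<epsilon> r c"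
    and "0 \<le> \<beta>" and "\<beta> \<le> 1"
    and "t > 2 \<longrightarrow> (\<forall>i. r i > 0) \<and> (\<forall>j. c j > 0) \<and> (\<forall>i j. P i j > 0 \<and> Q i j > 0)"
  shows "(\<lambda>i j. (\<beta> * P i j powr (1 / tstar t) + (1 - \<beta>) * Q i j powr (1 / tstar t))
            powr (tstar t)) \<in> co_polytope_ball t \<epsilon> r c"
proof -
  define s where "s = tstar t"
  define a where "a = 1 / tstar t"
  have sa: "s * a = 1" "a * s = 1" using assms(1) by (auto simp: s_def a_def tstar_def)
  define p where "p i j = P i j powr a" for i j
  define q where "q i j = Q i j powr a" for i j
  define W where "W i j = \<beta> * p i j + (1 - \<beta>) * q i j" for i j
  define M where "M i j = W i j powr s" for i j
  define V where "V i j = r i * c j" for i j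
  have goal: "(\<lambda>i j. (\<beta> * P i j powr (1 / tstar t) + (1 - \<beta>) * Q i j powr (1 / tstar t))
            powr (tstar t)) = M"
    by (intro ext) (simp add: M_def W_def p_def q_def a_def s_def)
  from assms(5) have Pb: "\<forall>i j. P i j \<ge> 0"
    "\<forall>i. (\<Sum>j\<in>UNIV. P i j powr a) = r i powr a"
    "\<forall>j. (\<Sum>i\<in>UNIV. P i j powr a) = c j powr a"
    "tempered_rel_entropy t P V \<le> \<epsilon>"
    by (auto simp: co_polytope_ball_def co_polytope_def a_def V_def[abs_def])
  from assms(6) have Qb: "\<forall>i j. Q i j \<ge> 0"
    "\<forall>i. (\<Sum>j\<in>UNIV. Q i j powr a) = r i powr a"
    "\<forall>j. (\<Sum>i\<in>UNIV. Q i j powr a) = c j powr a"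
    "tempered_rel_entropy t Q V \<le> \<epsilon>"
    by (auto simp: co_polytope_ball_def co_polytope_def a_def V_def[abs_def])
  have p0: "0 \<le> p i j" "0 \<le> q i j" for i j by (auto simp: p_def q_def)
  have W0: "0 \<le> W i j" for i j using p0[of i j] assms(7,8) by (simp add: W_def)
  have MW: "M i j powr a = W i j" for i j
    using W0[of i j] sa by (simp add: M_def powr_powr)
  have pP: "p i j powr s = P i j" "q i j powr s = Q i j" for i j
    using Pb(1) Qb(1) sa by (auto simp: p_def q_def powr_powr)
  have M0: "\<forall>i j. M i j \<ge> 0" by (simp add: M_def)
  have rows: "(\<Sum>j\<in>UNIV. M i j powr a) = r i powr a" for i
  proof -
    have "(\<Sum>j\<in>UNIV. M i j powr a) = \<beta> * (\<Sum>j\<in>UNIV. p i j) + (1 - \<beta>) * (\<Sum>j\<in>UNIV. q i j)"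
      by (simp add: MW W_def sum.distrib sum_distrib_left)
    also have "\<dots> = r i powr a" using Pb(2) Qb(2) by (simp add: p_def q_def algebra_simps)
    finally show ?thesis .
  qed
  have cols: "(\<Sum>i\<in>UNIV. M i j powr a) = c j powr a" for j
  proof -
    have "(\<Sum>i\<in>UNIV. M i j powr a) = \<beta> * (\<Sum>i\<in>UNIV. p i j) + (1 - \<beta>) * (\<Sum>i\<in>UNIV. q i j)"
      by (simp add: MW W_def sum.distrib sum_distrib_left)
    also have "\<dots> = c j powr a" using Pb(3) Qb(3) by (simp add: p_def q_def algebra_simps)
    finally show ?thesis .
  qed
  have DM: "tempered_rel_entropy t M V = (\<Sum>i\<in>UNIV. \<Sum>j\<in>UNIV. hfun t (V i j) (W i j))"
    by (simp add: tempered_rel_entropy_def hfun_def M_def s_def)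
  have DP: "tempered_rel_entropy t P V = (\<Sum>i\<in>UNIV. \<Sum>j\<in>UNIV. hfun t (V i j) (p i j))"
    by (simp add: tempered_rel_entropy_def hfun_def pP(1) s_def[symmetric])
  have DQ: "tempered_rel_entropy t Q V = (\<Sum>i\<in>UNIV. \<Sum>j\<in>UNIV. hfun t (V i j) (q i j))"
    by (simp add: tempered_rel_entropy_def hfun_def pP(2) s_def[symmetric])
  have pos: "t > 2 \<longrightarrow> 0 < p i j \<and> 0 < q i j" for i j
  proof
    assume "t > 2"
    then have "P i j > 0" "Q i j > 0" using assms(9) by auto
    then show "0 < p i j \<and> 0 < q i j" by (simp add: p_def q_def)
  qed
  have "tempered_rel_entropy t M V
      \<le> (\<Sum>i\<in>UNIV. \<Sum>j\<in>UNIV. \<beta> * hfun t (V i j) (p i j) + (1 - \<beta>) * hfun t (V i j) (q i j))"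
    unfolding DM W_def
    by (intro sum_mono hfun_convex assms(1,7,8) p0 pos)
  also have "\<dots> = \<beta> * tempered_rel_entropy t P V + (1 - \<beta>) * tempered_rel_entropy t Q V"
    by (simp add: DP DQ sum.distrib sum_distrib_left)
  also have "\<dots> \<le> \<beta> * \<epsilon> + (1 - \<beta>) * \<epsilon>"
    using Pb(4) Qb(4) assms(7,8) by (intro add_mono mult_left_mono) auto
  also have "\<dots> = \<epsilon>" by (simp add: algebra_simps)
  finally have DMe: "tempered_rel_entropy t M V \<le> \<epsilon>" .
  have "M \<in> co_polytope_ball t \<epsilon> r c"
    using M0 rows cols DMe
    by (simp add: co_polytope_ball_def co_polytope_def a_def V_def[abs_def])
  then show ?thesis using goal by simp
qed

end
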